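(* Let $G$ be a finite, simple, connected $(q+1)$-regular graph with $n$ vertices and $m$ edges, let $a\in[0,1]$ and $b\in\mathbb R$, and let $\tilde{\mathbf U}$ be the generalized Grover matrix of $G$ with parameters $a,b$. Then \begin{align*} \det(\lambda\mathbf I_{2m}-\tilde{\mathbf U})&=(\lambda^2-b^2)^{m-n}\det\Big(\{\lambda^2+b((1-q)a+bq)\}\mathbf I_n-\lambda((1-q)a+b(q+1))\mathbf P(G)\Big)\\ &=(\lambda^2-b^2)^{m-n}\det\Big(\{\lambda^2-\lambda((1-q)a+b(q+1))+b((1-q)a+bq)\}\mathbf I_n+\lambda\Big(b-\frac{q-1}{q+1}a\Big)\Delta\Big), \end{align*} where $\Delta=\mathbf D-\mathbf A(G)$ is the Laplacian of $G$.
   Context: $D(G)$ is the set of $2m$ arcs of $G$ (for each edge $uv$, both $(u,v)$ and $(v,u)$); for $e=(u,v)$, $o(e)=u$, $t(e)=v$, $e^{-1}=(v,u)$, and $d_v=\deg v$. The generalized Grover matrix $\tilde{\mathbf U}=(\tilde U_{ef})_{e,f\in D(G)}$ has $\tilde U_{ef}=(2/d_{t(f)}-1)a+b$ if $t(f)=o(e)$ and $f\ne e^{-1}$; $\tilde U_{ef}=(2/d_{t(f)}-1)a$ if $f=e^{-1}$; $0$ otherwise. $\mathbf P(G)$ has entries $P_{uv}=1/\deg u$ if $u,v$ adjacent and $0$ otherwise; $\mathbf D$ is the diagonal degree matrix and $\mathbf A(G)$ the adjacency matrix. *)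

theory Defs
  imports "Jordan_Normal_Form.Determinant"
begin

definition simple_graph :: "nat \<Rightarrow> (nat \<Rightarrow> nat \<Rightarrow> bool) \<Rightarrow> bool" where
  "simple_graph n adj \<longleftrightarrow>
     (\<forall>u v. adj u v \<longrightarrow> u < n \<and> v < n) \<and>
     (\<forall>u v. adj u v \<longrightarrow> adj v u) \<and> (\<forall>u. \<not> adj u u)"

definition connected_graph :: "nat \<Rightarrow> (nat \<Rightarrow> nat \<Rightarrow> bool) \<Rightarrow> bool" where
  "connected_graph n adj \<longleftrightarrow> (\<forall>u v. u < n \<longrightarrow> v < n \<longrightarrow> adj\<^sup>*\<^sup>* u v)"

definition deg :: "nat \<Rightarrow> (nat \<Rightarrow> nat \<Rightarrow> bool) \<Rightarrow> nat \<Rightarrow> nat" where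
  "deg n adj u = card {v. v < n \<and> adj u v}"

definition regular_graph :: "nat \<Rightarrow> (nat \<Rightarrow> nat \<Rightarrow> bool) \<Rightarrow> nat \<Rightarrow> bool" where
  "regular_graph n adj k \<longleftrightarrow> (\<forall>u < n. deg n adj u = k)"

definition num_edges :: "(nat \<Rightarrow> nat \<Rightarrow> bool) \<Rightarrow> nat" where
  "num_edges adj = card {{u, v} | u v. adj u v}"

definition arc_enum :: "(nat \<Rightarrow> nat \<Rightarrow> bool) \<Rightarrow> (nat \<times> nat) list \<Rightarrow> bool" where
  "arc_enum adj as \<longleftrightarrow> distinct as \<and> set as = {(u, v). adj u v}"

text \<open>Generalized Grover matrix, rows/columns indexed by the arcs in the order of the list.
  For an arc e = (u,v): o(e) = fst e, t(e) = snd e, e^{-1} = (snd e, fst e).\<close>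
definition grover_mat ::
  "nat \<Rightarrow> (nat \<Rightarrow> nat \<Rightarrow> bool) \<Rightarrow> (nat \<times> nat) list \<Rightarrow> real \<Rightarrow> real \<Rightarrow> real mat" where
  "grover_mat n adj as a b = mat (length as) (length as) (\<lambda>(i, j).
     let e = as ! i; f = as ! j; dtf = real (deg n adj (snd f)) in
     if snd f = fst e \<and> f \<noteq> (snd e, fst e) then (2 / dtf - 1) * a + b
     else if f = (snd e, fst e) then (2 / dtf - 1) * a
     else 0)"

definition trans_mat :: "nat \<Rightarrow> (nat \<Rightarrow> nat \<Rightarrow> bool) \<Rightarrow> real mat" where
  "trans_mat n adj = mat n n (\<lambda>(u, v). if adj u v then 1 / real (deg n adj u) else 0)"

definition degree_mat :: "nat \<Rightarrow> (nat \<Rightarrow> nat \<Rightarrow> bool) \<Rightarrow> real mat" where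
  "degree_mat n adj = mat n n (\<lambda>(u, v). if u = v then real (deg n adj u) else 0)"

definition adj_mat :: "nat \<Rightarrow> (nat \<Rightarrow> nat \<Rightarrow> bool) \<Rightarrow> real mat" where
  "adj_mat n adj = mat n n (\<lambda>(u, v). if adj u v then 1 else 0)"

end

theory Submission
  imports Defs
begin

locale gr = fixes n q :: nat and adj :: "nat \<Rightarrow> nat \<Rightarrow> bool" and as :: "(nat \<times> nat) list"
  assumes simple: "simple_graph n adj" and reg: "regular_graph n adj (q+1)" and ae: "arc_enum adj as"
begin

abbreviation "N \<equiv> length as"
definition "es = filter (\<lambda>e. fst e < snd e) as"
abbreviation "M \<equiv> length es"

lemma adj_lt: "adj u v \<Longrightarrow> u < n \<and> v < n" using simple unfolding simple_graph_def by auto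
lemma adj_sym: "adj u v \<Longrightarrow> adj v u" using simple unfolding simple_graph_def by auto
lemma adj_irr: "\<not> adj u u" using simple unfolding simple_graph_def by auto
lemma dist: "distinct as" using ae unfolding arc_enum_def by auto
lemma set_as: "set as = {(u, v). adj u v}" using ae unfolding arc_enum_def by auto
lemma deg_eq: "v < n \<Longrightarrow> deg n adj v = q + 1" using reg unfolding regular_graph_def by auto

lemma arc: "i < N \<Longrightarrow> adj (fst (as!i)) (snd (as!i))"
  using set_as nth_mem by (metis (mono_tags, lifting) case_prod_beta mem_Collect_eq)

lemma arc_swap: "i < N \<Longrightarrow> prod.swap (as!i) \<in> set as"
  using arc adj_sym set_as by (auto simp: prod.swap_def)

lemma sum_as: "(\<Sum>i = 0..<N. f (as!i)) = (\<Sum>x\<in>set as. f x)"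
  using sum.reindex_bij_betw[OF bij_betw_nth[OF dist refl refl], of f]
  by (simp add: atLeast0LessThan)

lemma dist_es: "distinct es" unfolding es_def using dist by simp
lemma set_es: "set es = {e \<in> set as. fst e < snd e}" unfolding es_def by auto

lemma sum_es: "(\<Sum>k = 0..<M. f (es!k)) = (\<Sum>x\<in>set es. f x)"
  using sum.reindex_bij_betw[OF bij_betw_nth[OF dist_es refl refl], of f]
  by (simp add: atLeast0LessThan)

lemma as_split: "set as = set es \<union> prod.swap ` set es"
proof -
  { fix x assume x: "x \<in> set as"
    then have "adj (fst x) (snd x)" using set_as by auto
    then have "fst x \<noteq> snd x" using adj_irr by metis
    then have "x \<in> set es \<or> x \<in> prod.swap ` set es"
    proof (cases "fst x < snd x")
      case True thus ?thesis using x set_es by auto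
    next
      case False
      then have "prod.swap x \<in> set es" using \<open>fst x \<noteq> snd x\<close> x set_es set_as adj_sym
        by (auto simp: prod.swap_def)
      then show ?thesis by (metis image_eqI swap_swap)
    qed }
  moreover have "prod.swap ` set es \<subseteq> set as" using set_es set_as adj_sym by (auto simp: prod.swap_def)
  ultimately show ?thesis using set_es by auto
qed

lemma N_eq: "N = 2 * M"
proof -
  have "set es \<inter> prod.swap ` set es = {}" using set_es by (auto simp: prod.swap_def)
  then have "card (set as) = card (set es) + card (prod.swap ` set es)"
    unfolding as_split by (simp add: card_Un_disjoint)
  also have "card (prod.swap ` set es) = card (set es)"
    by (rule card_image) (simp add: inj_on_def prod.swap_def prod_eq_iff)
  finally show ?thesis using distinct_card[OF dist] distinct_card[OF dist_es] by simp
qed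

lemma num_edges_eq: "num_edges adj = M"
proof -
  have "{{u, v} | u v. adj u v} = (\<lambda>e. {fst e, snd e}) ` set es"
  proof (rule equalityI; rule subsetI)
    fix s assume "s \<in> {{u, v} | u v. adj u v}"
    then obtain u v where s: "s = {u,v}" and uv: "adj u v" by auto
    have "u \<noteq> v" using uv adj_irr by metis
    show "s \<in> (\<lambda>e. {fst e, snd e}) ` set es"
    proof (cases "u < v")
      case True
      then have "(u,v) \<in> set es" using uv set_es set_as by auto
      then show ?thesis using s by force
    next
      case False
      then have "(v,u) \<in> set es" using uv set_es set_as adj_sym \<open>u \<noteq> v\<close> by auto
      then show ?thesis using s by force
    qed
  next
    fix s assume "s \<in> (\<lambda>e. {fst e, snd e}) ` set es"
    then obtain e where "e \<in> set es" "s = {fst e, snd e}" by auto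
    then have "adj (fst e) (snd e)" using set_es set_as by auto
    then show "s \<in> {{u, v} | u v. adj u v}" using \<open>s = {fst e, snd e}\<close> by blast
  qed
  moreover have "inj_on (\<lambda>e. {fst e, snd e}) (set es)"
  proof (rule inj_onI)
    fix x y assume "x \<in> set es" "y \<in> set es" "{fst x, snd x} = {fst y, snd y}"
    then show "x = y" using set_es by (auto simp: doubleton_eq_iff prod_eq_iff)
  qed
  ultimately show ?thesis unfolding num_edges_def
    using card_image distinct_card[OF dist_es] by metis
qed

lemma deg_card: "v < n \<Longrightarrow> card {x \<in> set as. snd x = v} = q + 1"
proof -
  assume v: "v < n"
  have "{x \<in> set as. snd x = v} = (\<lambda>u. (u, v)) ` {u. u < n \<and> adj v u}"
    using set_as adj_sym adj_lt by auto
  moreover have "card ((\<lambda>u. (u, v)) ` {u. u < n \<and> adj v u}) = card {u. u < n \<and> adj v u}"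
    by (rule card_image) (auto simp: inj_on_def)
  ultimately show ?thesis using deg_eq[OF v] unfolding deg_def by simp
qed

end


lemma mult_delta_simps:
  "(x::'a::semiring_0) * (if P then y else 0) = (if P then x * y else 0)"
  "(if P then y else 0) * x = (if P then y * x else 0)"
  by auto

context gr begin

definition Sm :: "real mat" where "Sm = mat N n (\<lambda>(i,v). if fst (as!i) = v then 1 else 0)"
definition Tm :: "real mat" where "Tm = mat N n (\<lambda>(i,v). if snd (as!i) = v then 1 else 0)"
definition Xm :: "real mat" where
  "Xm = mat N M (\<lambda>(i,k). if as!i = es!k \<or> as!i = prod.swap (es!k) then 1 else 0)"
definition Jm :: "real mat" where "Jm = mat N N (\<lambda>(i,j). if as!j = prod.swap (as!i) then 1 else 0)"

lemma carriers: "Sm \<in> carrier_mat N n" "Tm \<in> carrier_mat N n" "Xm \<in> carrier_mat N M"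
  "Jm \<in> carrier_mat N N" "adj_mat n adj \<in> carrier_mat n n"
  by (auto simp: Sm_def Tm_def Xm_def Jm_def adj_mat_def)

definition e0 :: "nat \<times> nat \<Rightarrow> nat \<times> nat" where
  "e0 x = (if fst x < snd x then x else prod.swap x)"

lemma pair_iff: assumes e: "e \<in> set es" and x: "x \<in> set as"
  shows "(x = e \<or> x = prod.swap e) \<longleftrightarrow> e = e0 x"
proof -
  have "fst e < snd e" using e set_es by auto
  moreover have "fst x \<noteq> snd x" using x set_as adj_irr by auto
  ultimately show ?thesis unfolding e0_def by (cases x; cases e; auto)
qed

lemma e0_in: assumes x: "x \<in> set as" shows "e0 x \<in> set es"
proof -
  have a: "adj (fst x) (snd x)" using x set_as by auto
  then have "fst x \<noteq> snd x" using adj_irr by metis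
  show ?thesis
  proof (cases "fst x < snd x")
    case True then show ?thesis using x set_es unfolding e0_def by auto
  next
    case False
    then have "snd x < fst x" using \<open>fst x \<noteq> snd x\<close> by linarith
    moreover have "prod.swap x \<in> set as" using a adj_sym set_as by (auto simp: prod.swap_def)
    ultimately show ?thesis using False set_es unfolding e0_def by auto
  qed
qed

lemma e0_pair: "(y = e0 x \<or> y = prod.swap (e0 x)) \<longleftrightarrow> (y = x \<or> y = prod.swap x)"
  by (auto simp: e0_def)

lemma E1: assumes i: "i < N" and j: "j < N"
  shows "(\<Sum>k = 0..<M. Xm $$ (i,k) * Xm $$ (j,k)) =
    (if i = j then 1 else 0) + (if as!j = prod.swap (as!i) then 1 else 0)"
proof -
  let ?x = "as!i" and ?y = "as!j"
  have x: "?x \<in> set as" and y: "?y \<in> set as" using i j by auto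
  have "(\<Sum>k = 0..<M. Xm $$ (i,k) * Xm $$ (j,k)) =
     (\<Sum>k = 0..<M. (\<lambda>e. (if ?x = e \<or> ?x = prod.swap e then 1 else 0) *
        (if ?y = e \<or> ?y = prod.swap e then 1 else (0::real))) (es!k))"
    using i j by (intro sum.cong) (auto simp: Xm_def)
  also have "\<dots> = (\<Sum>e\<in>set es. (if ?x = e \<or> ?x = prod.swap e then 1 else 0) *
        (if ?y = e \<or> ?y = prod.swap e then 1 else (0::real)))"
    by (rule sum_es)
  also have "\<dots> = (\<Sum>e\<in>set es. if e = e0 ?x then
        (if ?y = e0 ?x \<or> ?y = prod.swap (e0 ?x) then 1 else (0::real)) else 0)"
    by (intro sum.cong refl) (simp only: pair_iff[OF _ x], simp)
  also have "\<dots> = (if ?y = e0 ?x \<or> ?y = prod.swap (e0 ?x) then 1 else 0)"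
    by (simp only: sum.delta[OF finite_set] e0_in[OF x] if_True)
  also have "\<dots> = (if ?y = ?x \<or> ?y = prod.swap ?x then 1 else 0)"
    by (rule arg_cong[where f="\<lambda>P. if P then 1 else 0"], rule e0_pair)
  also have "\<dots> = (if i = j then 1 else 0) + (if ?y = prod.swap ?x then 1 else 0)"
  proof -
    have "fst ?x \<noteq> snd ?x" using x set_as adj_irr by auto
    then have "\<not> (?y = ?x \<and> ?y = prod.swap ?x)" by (cases ?x) auto
    moreover have "?y = ?x \<longleftrightarrow> i = j" using nth_eq_iff_index_eq[OF dist j i] by auto
    ultimately show ?thesis by auto
  qed
  finally show ?thesis .
qed


lemma E3: assumes k: "k < M" and l: "l < M"
  shows "(\<Sum>i = 0..<N. Xm $$ (i,k) * Xm $$ (i,l)) = (if k = l then 2 else 0)"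
proof -
  let ?e = "es!k" and ?f = "es!l"
  have e: "?e \<in> set es" and f: "?f \<in> set es" using k l by auto
  have ea: "?e \<in> set as" "prod.swap ?e \<in> set as" using e as_split by auto
  have "(\<Sum>i = 0..<N. Xm $$ (i,k) * Xm $$ (i,l)) =
     (\<Sum>i = 0..<N. (\<lambda>x. (if x = ?e \<or> x = prod.swap ?e then 1 else 0) *
        (if x = ?f \<or> x = prod.swap ?f then 1 else (0::real))) (as!i))"
    using k l by (intro sum.cong) (auto simp: Xm_def)
  also have "\<dots> = (\<Sum>x\<in>set as. (if x = ?e \<or> x = prod.swap ?e then 1 else 0) *
        (if x = ?f \<or> x = prod.swap ?f then 1 else (0::real)))"
    by (rule sum_as)
  also have "\<dots> = (if k = l then 2 else 0)"
  proof (cases "k = l")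
    case True
    have lt: "fst ?e < snd ?e" using e set_es by auto
    have "(\<Sum>x\<in>set as. (if x = ?e \<or> x = prod.swap ?e then 1 else 0) *
        (if x = ?e \<or> x = prod.swap ?e then 1 else (0::real))) =
        (\<Sum>x\<in>set as. if x \<in> {?e, prod.swap ?e} then 1 else 0)"
      by (intro sum.cong) auto
    also have "\<dots> = card (set as \<inter> {?e, prod.swap ?e})"
      using sum.inter_restrict[OF finite_set, of "\<lambda>_. (1::real)" as "{?e, prod.swap ?e}"] by simp
    also have "set as \<inter> {?e, prod.swap ?e} = {?e, prod.swap ?e}" using ea by auto
    also have "card {?e, prod.swap ?e} = 2" using lt by (cases ?e) auto
    finally show ?thesis using True by simp
  next
    case False
    have ne: "?e \<noteq> ?f" using nth_eq_iff_index_eq[OF dist_es k l] False by auto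
    have "fst ?e < snd ?e" "fst ?f < snd ?f" using e f set_es by auto
    then have nd: "\<And>x. \<not> ((x = ?e \<or> x = prod.swap ?e) \<and> (x = ?f \<or> x = prod.swap ?f))"
      using ne by (cases ?e; cases ?f; auto)
    have H: "\<And>x. (if x = ?e \<or> x = prod.swap ?e then 1 else 0) *
        (if x = ?f \<or> x = prod.swap ?f then 1 else (0::real)) = 0"
      subgoal for x using nd[of x] by (cases "x = ?e \<or> x = prod.swap ?e") simp_all
      done
    then show ?thesis using False by (simp only: sum.neutral_const if_False)
  qed
  finally show ?thesis .
qed


lemma E2: assumes i: "i < N" and j: "j < N"
  shows "(\<Sum>v = 0..<n. Sm $$ (i,v) * Tm $$ (j,v)) = (if snd (as!j) = fst (as!i) then 1 else 0)"
proof -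
  have lt: "fst (as!i) < n" using arc[OF i] adj_lt by auto
  have "(\<Sum>v = 0..<n. Sm $$ (i,v) * Tm $$ (j,v)) =
    (\<Sum>v = 0..<n. if v = fst (as!i) then (if snd (as!j) = fst (as!i) then 1 else 0) else 0)"
    using i j by (intro sum.cong) (auto simp: Sm_def Tm_def)
  also have "\<dots> = (if snd (as!j) = fst (as!i) then 1 else 0)" using lt by simp
  finally show ?thesis .
qed

lemma E4: assumes v: "v < n" and w: "w < n"
  shows "(\<Sum>i = 0..<N. Tm $$ (i,v) * Sm $$ (i,w)) = (if adj v w then 1 else 0)"
proof -
  have "(\<Sum>i = 0..<N. Tm $$ (i,v) * Sm $$ (i,w)) =
    (\<Sum>i = 0..<N. (\<lambda>x. if x = (w,v) then 1 else (0::real)) (as!i))"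
    using v w by (intro sum.cong) (auto simp: Sm_def Tm_def prod_eq_iff)
  also have "\<dots> = (\<Sum>x\<in>set as. if x = (w,v) then 1 else (0::real))" by (rule sum_as)
  also have "\<dots> = (if (w,v) \<in> set as then 1 else 0)" by (simp only: sum.delta[OF finite_set])
  also have "\<dots> = (if adj v w then 1 else 0)" using set_as adj_sym by auto
  finally show ?thesis .
qed

lemma JS: "Jm * Sm = Tm"
proof (rule eq_matI)
  fix i w assume i: "i < dim_row Tm" and w: "w < dim_col Tm"
  then have i: "i < N" and w: "w < n" by (auto simp: Tm_def)
  have "(Jm * Sm) $$ (i, w) = (\<Sum>j = 0..<N. Jm $$ (i,j) * Sm $$ (j,w))"
    using i w by (simp add: Jm_def Sm_def scalar_prod_def)
  also have "\<dots> = (\<Sum>j = 0..<N. (\<lambda>x. if x = prod.swap (as!i) then (if fst x = w then 1 else 0) else (0::real)) (as!j))"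
    using i w by (intro sum.cong) (auto simp: Jm_def Sm_def)
  also have "\<dots> = (\<Sum>x\<in>set as. if x = prod.swap (as!i) then (if fst x = w then 1 else 0) else (0::real))"
    by (rule sum_as)
  also have "\<dots> = Tm $$ (i, w)" using arc_swap[OF i] i w by (simp add: Tm_def prod.swap_def)
  finally show "(Jm * Sm) $$ (i, w) = Tm $$ (i, w)" .
qed (auto simp: Jm_def Sm_def Tm_def)

lemma TT: "Tm\<^sup>T * Tm = real (q+1) \<cdot>\<^sub>m 1\<^sub>m n"
proof (rule eq_matI)
  fix v w assume "v < dim_row (real (q+1) \<cdot>\<^sub>m 1\<^sub>m n)" "w < dim_col (real (q+1) \<cdot>\<^sub>m 1\<^sub>m n)"
  then have v: "v < n" and w: "w < n" by auto
  have "(Tm\<^sup>T * Tm) $$ (v, w) = (\<Sum>i = 0..<N. Tm $$ (i,v) * Tm $$ (i,w))"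
    using v w by (simp add: Tm_def scalar_prod_def)
  also have "\<dots> = (\<Sum>i = 0..<N. (\<lambda>x. if snd x = v then (if v = w then 1 else 0) else (0::real)) (as!i))"
    using v w by (intro sum.cong) (auto simp: Tm_def)
  also have "\<dots> = (\<Sum>x\<in>set as. if snd x = v then (if v = w then 1 else 0) else (0::real))"
    by (rule sum_as)
  also have "\<dots> = (if v = w then real (card {x \<in> set as. snd x = v}) else 0)"
    by (simp add: sum.If_cases Int_def conj_commute)
  also have "\<dots> = (real (q+1) \<cdot>\<^sub>m 1\<^sub>m n) $$ (v, w)" using v w deg_card[OF v] by (cases "v = w") simp_all
  finally show "(Tm\<^sup>T * Tm) $$ (v, w) = (real (q+1) \<cdot>\<^sub>m 1\<^sub>m n) $$ (v, w)" .
qed (auto simp: Tm_def)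

lemma TS: "Tm\<^sup>T * Sm = adj_mat n adj"
proof (rule eq_matI)
  fix v w assume "v < dim_row (adj_mat n adj)" "w < dim_col (adj_mat n adj)"
  then have v: "v < n" and w: "w < n" by (auto simp: adj_mat_def)
  have "(Tm\<^sup>T * Sm) $$ (v, w) = (\<Sum>i = 0..<N. Tm $$ (i,v) * Sm $$ (i,w))"
    using v w by (simp add: Tm_def Sm_def scalar_prod_def)
  then show "(Tm\<^sup>T * Sm) $$ (v, w) = adj_mat n adj $$ (v, w)"
    using E4[OF v w] v w by (simp add: adj_mat_def)
qed (auto simp: Tm_def Sm_def adj_mat_def)

lemma XX: "Xm * Xm\<^sup>T = 1\<^sub>m N + Jm"
proof (rule eq_matI)
  fix i j assume "i < dim_row (1\<^sub>m N + Jm)" "j < dim_col (1\<^sub>m N + Jm)"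
  then have i: "i < N" and j: "j < N" by (auto simp: Jm_def)
  have "(Xm * Xm\<^sup>T) $$ (i, j) = (\<Sum>k = 0..<M. Xm $$ (i,k) * Xm $$ (j,k))"
    using i j by (simp add: Xm_def scalar_prod_def)
  then show "(Xm * Xm\<^sup>T) $$ (i, j) = (1\<^sub>m N + Jm) $$ (i, j)"
    using E1[OF i j] i j by (simp add: Jm_def)
qed (auto simp: Jm_def Xm_def)

lemma TXXS: "(Tm\<^sup>T * Xm) * (Xm\<^sup>T * Sm) = adj_mat n adj + real (q+1) \<cdot>\<^sub>m 1\<^sub>m n"
proof -
  have cT: "Tm\<^sup>T \<in> carrier_mat n N" and cX: "Xm \<in> carrier_mat N M" and cXt: "Xm\<^sup>T \<in> carrier_mat M N"
    and cS: "Sm \<in> carrier_mat N n" and cJ: "Jm \<in> carrier_mat N N" using carriers by auto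
  have cXS: "Xm\<^sup>T * Sm \<in> carrier_mat M n" using cXt cS by auto
  have "(Tm\<^sup>T * Xm) * (Xm\<^sup>T * Sm) = Tm\<^sup>T * (Xm * (Xm\<^sup>T * Sm))"
    by (rule assoc_mult_mat[OF cT cX cXS])
  also have "Xm * (Xm\<^sup>T * Sm) = (Xm * Xm\<^sup>T) * Sm"
    by (rule assoc_mult_mat[OF cX cXt cS, symmetric])
  also have "\<dots> = Sm + Jm * Sm" unfolding XX
    by (subst add_mult_distrib_mat[OF _ cJ cS]) (auto simp: left_mult_one_mat[OF cS])
  also have "Tm\<^sup>T * (Sm + Jm * Sm) = Tm\<^sup>T * Sm + Tm\<^sup>T * Tm" unfolding JS
    by (rule mult_add_distrib_mat[OF cT cS]) (simp add: carriers)
  finally show ?thesis unfolding TS TT .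
qed

end


lemma schur_scalar:
  fixes B C D :: "'a::idom mat"
  assumes B: "B \<in> carrier_mat k n" and C: "C \<in> carrier_mat n k" and D: "D \<in> carrier_mat n n"
  shows "det (four_block_mat (c \<cdot>\<^sub>m 1\<^sub>m k) B C D) * c ^ n = c ^ k * det (c \<cdot>\<^sub>m D - C * B)"
proof -
  let ?M = "four_block_mat (c \<cdot>\<^sub>m 1\<^sub>m k) B C D"
  let ?R = "four_block_mat (1\<^sub>m k) (- B) (0\<^sub>m n k) (c \<cdot>\<^sub>m 1\<^sub>m n)"
  have M: "?M \<in> carrier_mat (k+n) (k+n)" using B C D by auto
  have R: "?R \<in> carrier_mat (k+n) (k+n)" using B C D by auto
  have c1: "c \<cdot>\<^sub>m 1\<^sub>m k \<in> carrier_mat k k" "1\<^sub>m k \<in> carrier_mat k k" "- B \<in> carrier_mat k n"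
    "0\<^sub>m n k \<in> carrier_mat n k" "c \<cdot>\<^sub>m 1\<^sub>m n \<in> carrier_mat n n" using B by auto
  have MR: "?M * ?R = four_block_mat (c \<cdot>\<^sub>m 1\<^sub>m k) (0\<^sub>m k n) C (c \<cdot>\<^sub>m D - C * B)"
    apply (subst mult_four_block_mat[OF c1(1) B C D c1(2-5)])
    using B C D apply (auto)
    by (rule eq_matI; auto simp: scalar_prod_def mult.commute[of _ c] mult.left_commute[of _ c] 
      mult.assoc[symmetric] sum_distrib_left[symmetric] mult_delta_simps sum.delta cong: if_cong)
  have "det (?M * ?R) = det ?M * det ?R" by (rule det_mult[OF M R])
  moreover have "det ?R = c ^ n"
    by (subst det_four_block_mat_lower_left_zero[OF c1(2,3) refl c1(5)]) simp
  moreover have "det (?M * ?R) = c ^ k * det (c \<cdot>\<^sub>m D - C * B)"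
    unfolding MR using B C D
    by (subst det_four_block_mat_upper_right_zero[OF c1(1) refl, of _ n]) auto
  ultimately show ?thesis by simp
qed

lemma sylvester_det:
  fixes A B :: "'a::idom mat"
  assumes A: "A \<in> carrier_mat k n" and B: "B \<in> carrier_mat n k"
  shows "det (c \<cdot>\<^sub>m 1\<^sub>m k - A * B) * c ^ n = c ^ k * det (c \<cdot>\<^sub>m 1\<^sub>m n - B * A)"
proof -
  let ?M = "four_block_mat (c \<cdot>\<^sub>m 1\<^sub>m k) A B (1\<^sub>m n)"
  let ?L = "four_block_mat (1\<^sub>m k) (- A) (0\<^sub>m n k) (1\<^sub>m n)"
  have M: "?M \<in> carrier_mat (k+n) (k+n)" using A B by auto
  have L: "?L \<in> carrier_mat (k+n) (k+n)" using A B by auto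
  have c1: "c \<cdot>\<^sub>m 1\<^sub>m k \<in> carrier_mat k k" "1\<^sub>m k \<in> carrier_mat k k" "- A \<in> carrier_mat k n"
    "0\<^sub>m n k \<in> carrier_mat n k" "1\<^sub>m n \<in> carrier_mat n n" using A by auto
  have LM: "?L * ?M = four_block_mat (c \<cdot>\<^sub>m 1\<^sub>m k - A * B) (0\<^sub>m k n) B (1\<^sub>m n)"
    apply (subst mult_four_block_mat[OF c1(2,3,4,5) c1(1) A B c1(5)])
    using A B by auto
  have "det (?L * ?M) = det ?L * det ?M" by (rule det_mult[OF L M])
  moreover have "det ?L = 1"
    by (subst det_four_block_mat_lower_left_zero[OF c1(2,3) refl c1(5)]) simp
  moreover have "det (?L * ?M) = det (c \<cdot>\<^sub>m 1\<^sub>m k - A * B)"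
    unfolding LM using A B
    by (subst det_four_block_mat_upper_right_zero[of _ k _ n]) auto
  moreover have "det ?M * c ^ n = c ^ k * det (c \<cdot>\<^sub>m 1\<^sub>m n - B * A)"
    using schur_scalar[OF A B, of "1\<^sub>m n" c] by simp
  ultimately show ?thesis by simp
qed

lemma sum_split_add: "(\<Sum>k = 0..<(a::nat)+b. (f k::'a::comm_monoid_add)) = (\<Sum>k = 0..<a. f k) + (\<Sum>v = 0..<b. f (a+v))"
  by (induct b) (auto simp: add.assoc)

context gr begin

definition Wm :: "real mat" where
  "Wm = mat N (M+n) (\<lambda>(i,k). if k < M then Xm $$ (i,k) else Sm $$ (i,k-M))"
definition Zm :: "real \<Rightarrow> real \<Rightarrow> real mat" where
  "Zm al b = mat N (M+n) (\<lambda>(i,k). if k < M then - b * Xm $$ (i,k) else al * Tm $$ (i,k-M))"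

lemma dimW[simp]: "dim_row Wm = N" "dim_col Wm = M + n" by (auto simp: Wm_def)
lemma dimZ[simp]: "dim_row (Zm al b) = N" "dim_col (Zm al b) = M + n" by (auto simp: Zm_def)

lemma WZ: assumes i: "i < N" and j: "j < N"
  shows "(Wm * (Zm al b)\<^sup>T) $$ (i,j) = - b * ((if i = j then 1 else 0) + (if as!j = prod.swap (as!i) then 1 else 0))
     + al * (if snd (as!j) = fst (as!i) then 1 else 0)"
proof -
  have "(Wm * (Zm al b)\<^sup>T) $$ (i,j) = (\<Sum>k = 0..<M+n. Wm $$ (i,k) * Zm al b $$ (j,k))"
    using i j by (simp add: scalar_prod_def)
  also have "\<dots> = (\<Sum>k = 0..<M. Wm $$ (i,k) * Zm al b $$ (j,k)) + (\<Sum>v = 0..<n. Wm $$ (i,M+v) * Zm al b $$ (j,M+v))"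
    by (rule sum_split_add)
  also have "(\<Sum>k = 0..<M. Wm $$ (i,k) * Zm al b $$ (j,k)) = - b * (\<Sum>k = 0..<M. Xm $$ (i,k) * Xm $$ (j,k))"
    unfolding sum_distrib_left using i j by (intro sum.cong) (auto simp: Wm_def Zm_def)
  also have "(\<Sum>v = 0..<n. Wm $$ (i,M+v) * Zm al b $$ (j,M+v)) = al * (\<Sum>v = 0..<n. Sm $$ (i,v) * Tm $$ (j,v))"
    unfolding sum_distrib_left using i j by (intro sum.cong) (auto simp: Wm_def Zm_def)
  finally show ?thesis unfolding E1[OF i j] E2[OF i j] .
qed

lemma ZW: assumes k: "k < M + n" and l: "l < M + n"
  shows "((Zm al b)\<^sup>T * Wm) $$ (k,l) = (\<Sum>i = 0..<N. Zm al b $$ (i,k) * Wm $$ (i,l))"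
  using k l by (simp add: scalar_prod_def)

lemma Kmat: "(lam - b) \<cdot>\<^sub>m 1\<^sub>m (M+n) - (Zm al b)\<^sup>T * Wm =
   four_block_mat ((lam + b) \<cdot>\<^sub>m 1\<^sub>m M) (b \<cdot>\<^sub>m (Xm\<^sup>T * Sm)) ((- al) \<cdot>\<^sub>m (Tm\<^sup>T * Xm))
     ((lam - b) \<cdot>\<^sub>m 1\<^sub>m n - al \<cdot>\<^sub>m adj_mat n adj)"
proof (rule eq_matI)
  fix k l assume "k < dim_row (four_block_mat ((lam + b) \<cdot>\<^sub>m 1\<^sub>m M) (b \<cdot>\<^sub>m (Xm\<^sup>T * Sm)) ((- al) \<cdot>\<^sub>m (Tm\<^sup>T * Xm))
     ((lam - b) \<cdot>\<^sub>m 1\<^sub>m n - al \<cdot>\<^sub>m adj_mat n adj))"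
    "l < dim_col (four_block_mat ((lam + b) \<cdot>\<^sub>m 1\<^sub>m M) (b \<cdot>\<^sub>m (Xm\<^sup>T * Sm)) ((- al) \<cdot>\<^sub>m (Tm\<^sup>T * Xm))
     ((lam - b) \<cdot>\<^sub>m 1\<^sub>m n - al \<cdot>\<^sub>m adj_mat n adj))"
  then have k: "k < M + n" and l: "l < M + n" by (auto simp: adj_mat_def)
  have cS: "Sm \<in> carrier_mat N n" and cT: "Tm \<in> carrier_mat N n" and cX: "Xm \<in> carrier_mat N M"
    using carriers by auto
  have L: "((lam - b) \<cdot>\<^sub>m 1\<^sub>m (M+n) - (Zm al b)\<^sup>T * Wm) $$ (k, l) =
     (lam - b) * (if k = l then 1 else 0) - (\<Sum>i = 0..<N. Zm al b $$ (i,k) * Wm $$ (i,l))"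
    using k l by (subst index_minus_mat) (auto simp del: index_mult_mat simp: ZW[OF k l] index_mult_mat(2,3))
  show "((lam - b) \<cdot>\<^sub>m 1\<^sub>m (M+n) - (Zm al b)\<^sup>T * Wm) $$ (k, l) = four_block_mat ((lam + b) \<cdot>\<^sub>m 1\<^sub>m M) (b \<cdot>\<^sub>m (Xm\<^sup>T * Sm)) ((- al) \<cdot>\<^sub>m (Tm\<^sup>T * Xm))
     ((lam - b) \<cdot>\<^sub>m 1\<^sub>m n - al \<cdot>\<^sub>m adj_mat n adj) $$ (k, l)"
  proof (cases "k < M")
    case kM: True
    show ?thesis
    proof (cases "l < M")
      case lM: True
      have "(\<Sum>i = 0..<N. Zm al b $$ (i,k) * Wm $$ (i,l)) = - b * (\<Sum>i = 0..<N. Xm $$ (i,k) * Xm $$ (i,l))"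
        unfolding sum_distrib_left using kM lM by (intro sum.cong) (auto simp: Wm_def Zm_def)
      then show ?thesis using k l kM lM cX E3[OF kM lM] unfolding L by (simp add: adj_mat_def)
    next
      case lM: False
      have "(\<Sum>i = 0..<N. Zm al b $$ (i,k) * Wm $$ (i,l)) = - b * (\<Sum>i = 0..<N. Xm $$ (i,k) * Sm $$ (i,l-M))"
        unfolding sum_distrib_left using kM lM l by (intro sum.cong) (auto simp: Wm_def Zm_def)
      then show ?thesis using k l kM lM cX cS unfolding L by (simp add: scalar_prod_def adj_mat_def)
    qed
  next
    case kM: False
    show ?thesis
    proof (cases "l < M")
      case lM: True
      have "(\<Sum>i = 0..<N. Zm al b $$ (i,k) * Wm $$ (i,l)) = al * (\<Sum>i = 0..<N. Tm $$ (i,k-M) * Xm $$ (i,l))"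
        unfolding sum_distrib_left using kM lM k by (intro sum.cong) (auto simp: Wm_def Zm_def)
      then show ?thesis using k l kM lM cX cT unfolding L by (simp add: scalar_prod_def adj_mat_def)
    next
      case lM: False
      have "(\<Sum>i = 0..<N. Zm al b $$ (i,k) * Wm $$ (i,l)) = al * (\<Sum>i = 0..<N. Tm $$ (i,k-M) * Sm $$ (i,l-M))"
        unfolding sum_distrib_left using kM lM k l by (intro sum.cong) (auto simp: Wm_def Zm_def)
      moreover have "k - M < n" "l - M < n" "(k - M = l - M) = (k = l)" using k l kM lM by auto
      ultimately show ?thesis using k l kM lM E4[of "k-M" "l-M"] unfolding L by (simp add: adj_mat_def)
    qed
  qed
qed (auto simp: adj_mat_def)

lemma dimG: "dim_row (grover_mat n adj as a b) = N" "dim_col (grover_mat n adj as a b) = N"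
  by (auto simp: grover_mat_def)

lemma Top: assumes al: "al = (2 / real (q+1) - 1) * a + b"
  shows "lam \<cdot>\<^sub>m 1\<^sub>m N - grover_mat n adj as a b = (lam - b) \<cdot>\<^sub>m 1\<^sub>m N - Wm * (Zm al b)\<^sup>T"
proof (rule eq_matI)
  fix i j assume "i < dim_row ((lam - b) \<cdot>\<^sub>m 1\<^sub>m N - Wm * (Zm al b)\<^sup>T)"
     "j < dim_col ((lam - b) \<cdot>\<^sub>m 1\<^sub>m N - Wm * (Zm al b)\<^sup>T)"
  then have i: "i < N" and j: "j < N" by auto
  have R: "((lam - b) \<cdot>\<^sub>m 1\<^sub>m N - Wm * (Zm al b)\<^sup>T) $$ (i,j) = (lam - b) * (if i = j then 1 else 0)
     - (- b * ((if i = j then 1 else 0) + (if as!j = prod.swap (as!i) then 1 else 0))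
     + al * (if snd (as!j) = fst (as!i) then 1 else 0))"
    using i j by (subst index_minus_mat) (auto simp del: index_mult_mat simp: WZ[OF i j] index_mult_mat(2,3))
  have d: "real (deg n adj (snd (as!j))) = real (q+1)" using deg_eq arc[OF j] adj_lt by auto
  have d2: "real (deg n adj (fst (as!i))) = real (q+1)" using deg_eq arc[OF i] adj_lt by auto
  have G: "grover_mat n adj as a b $$ (i,j) =
     (if snd (as!j) = fst (as!i) \<and> as!j \<noteq> prod.swap (as!i) then al
      else if as!j = prod.swap (as!i) then al - b else 0)"
  proof -
    have "grover_mat n adj as a b $$ (i,j) = (if snd (as!j) = fst (as!i) \<and> as!j \<noteq> (snd (as!i), fst (as!i))
      then (2 / real (deg n adj (snd (as!j))) - 1) * a + b
      else if as!j = (snd (as!i), fst (as!i)) then (2 / real (deg n adj (snd (as!j))) - 1) * a else 0)"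
      unfolding grover_mat_def using i j by (simp add: Let_def)
    also have "\<dots> = (if snd (as!j) = fst (as!i) \<and> as!j \<noteq> prod.swap (as!i) then al
      else if as!j = prod.swap (as!i) then al - b else 0)"
      unfolding d al prod.swap_def by simp
    finally show ?thesis .
  qed
  have ne: "as!i \<noteq> prod.swap (as!i)" using arc[OF i] adj_irr by (cases "as!i") auto
  show "(lam \<cdot>\<^sub>m 1\<^sub>m N - grover_mat n adj as a b) $$ (i,j) = ((lam - b) \<cdot>\<^sub>m 1\<^sub>m N - Wm * (Zm al b)\<^sup>T) $$ (i,j)"
  proof -
    have Lf: "(lam \<cdot>\<^sub>m 1\<^sub>m N - grover_mat n adj as a b) $$ (i,j) = lam * (if i = j then 1 else 0) - grover_mat n adj as a b $$ (i,j)"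
      using i j by (subst index_minus_mat) (auto simp: dimG)
    have nl: "snd (as!i) \<noteq> fst (as!i)" using arc[OF i] adj_irr by metis
    show ?thesis
    proof (cases "as!j = prod.swap (as!i)")
      case True
      then have s: "snd (as!j) = fst (as!i)" by (simp add: prod.swap_def)
      have "i \<noteq> j" using ne True by auto
      then show ?thesis unfolding Lf R G using True s by (simp add: algebra_simps)
    next
      case False
      show ?thesis
      proof (cases "snd (as!j) = fst (as!i)")
        case True
        then have "i \<noteq> j" using nl by auto
        then show ?thesis unfolding Lf R G using True False by (simp add: algebra_simps)
      next
        case F2: False
        then show ?thesis unfolding Lf R G using False by (cases "i = j") (simp_all add: algebra_simps)
      qed
    qed
  qed
qed (auto simp: grover_mat_def)

abbreviation "NN lam al b \<equiv> (lam + b) \<cdot>\<^sub>m ((lam - b) \<cdot>\<^sub>m 1\<^sub>m n - al \<cdot>\<^sub>m adj_mat n adj)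
   - ((- al) \<cdot>\<^sub>m (Tm\<^sup>T * Xm)) * (b \<cdot>\<^sub>m (Xm\<^sup>T * Sm))"

lemma comb: fixes x :: real shows "x * p = y * k \<Longrightarrow> k * r = s * t \<Longrightarrow> x * p * r = y * s * t"
proof -
  assume h1: "x * p = y * k" and h2: "k * r = s * t"
  have "x * p * r = y * k * r" using h1 by simp
  also have "\<dots> = y * (k * r)" by (simp only: mult.assoc)
  also have "\<dots> = y * (s * t)" using h2 by simp
  finally show ?thesis by (simp only: mult.assoc)
qed

lemma main_id: assumes al: "al = (2 / real (q+1) - 1) * a + b"
  shows "det (lam \<cdot>\<^sub>m 1\<^sub>m N - grover_mat n adj as a b) * (lam - b)^(M+n) * (lam + b)^n
     = (lam - b)^N * (lam + b)^M * det (NN lam al b)"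
proof -
  have cW: "Wm \<in> carrier_mat N (M+n)" and cZ: "(Zm al b)\<^sup>T \<in> carrier_mat (M+n) N" by auto
  have cS: "Sm \<in> carrier_mat N n" and cT: "Tm \<in> carrier_mat N n" and cX: "Xm \<in> carrier_mat N M"
    using carriers by auto
  have cB: "b \<cdot>\<^sub>m (Xm\<^sup>T * Sm) \<in> carrier_mat M n" using cS cX by auto
  have cC: "(- al) \<cdot>\<^sub>m (Tm\<^sup>T * Xm) \<in> carrier_mat n M" using cT cX by auto
  have cD: "(lam - b) \<cdot>\<^sub>m 1\<^sub>m n - al \<cdot>\<^sub>m adj_mat n adj \<in> carrier_mat n n" by (auto simp: adj_mat_def)
  have "det (lam \<cdot>\<^sub>m 1\<^sub>m N - grover_mat n adj as a b) * (lam - b)^(M+n)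
     = (lam - b)^N * det ((lam - b) \<cdot>\<^sub>m 1\<^sub>m (M+n) - (Zm al b)\<^sup>T * Wm)"
    unfolding Top[OF al] by (rule sylvester_det[OF cW cZ])
  also have "\<dots> = (lam - b)^N * det (four_block_mat ((lam + b) \<cdot>\<^sub>m 1\<^sub>m M) (b \<cdot>\<^sub>m (Xm\<^sup>T * Sm)) ((- al) \<cdot>\<^sub>m (Tm\<^sup>T * Xm))
     ((lam - b) \<cdot>\<^sub>m 1\<^sub>m n - al \<cdot>\<^sub>m adj_mat n adj))"
    unfolding Kmat ..
  finally have 1: "det (lam \<cdot>\<^sub>m 1\<^sub>m N - grover_mat n adj as a b) * (lam - b)^(M+n) = \<dots>" .
  have 2: "det (four_block_mat ((lam + b) \<cdot>\<^sub>m 1\<^sub>m M) (b \<cdot>\<^sub>m (Xm\<^sup>T * Sm)) ((- al) \<cdot>\<^sub>m (Tm\<^sup>T * Xm))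
     ((lam - b) \<cdot>\<^sub>m 1\<^sub>m n - al \<cdot>\<^sub>m adj_mat n adj)) * (lam + b)^n = (lam + b)^M * det (NN lam al b)"
    by (rule schur_scalar[OF cB cC cD])
  show ?thesis using 1 2 by (rule comb)
qed

lemma NN_eq: assumes al: "al = (2 / real (q+1) - 1) * a + b"
  shows "NN lam al b = (lam\<^sup>2 + b * ((1 - real q) * a + b * real q)) \<cdot>\<^sub>m 1\<^sub>m n
                - (lam * ((1 - real q) * a + b * (real q + 1))) \<cdot>\<^sub>m trans_mat n adj"
proof -
  have cS: "Sm \<in> carrier_mat N n" and cT: "Tm \<in> carrier_mat N n" and cX: "Xm \<in> carrier_mat N M"
    using carriers by auto
  have cTX: "Tm\<^sup>T * Xm \<in> carrier_mat n M" and cXS: "Xm\<^sup>T * Sm \<in> carrier_mat M n" using cS cT cX by auto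
  have CB: "((- al) \<cdot>\<^sub>m (Tm\<^sup>T * Xm)) * (b \<cdot>\<^sub>m (Xm\<^sup>T * Sm)) = (- al) \<cdot>\<^sub>m (b \<cdot>\<^sub>m (adj_mat n adj + real (q+1) \<cdot>\<^sub>m 1\<^sub>m n))"
    unfolding mult_smult_assoc_mat[OF cTX smult_carrier_mat[OF cXS]] mult_smult_distrib[OF cTX cXS] TXXS ..
  have alq: "al * real (q+1) = (1 - real q) * a + b * (real q + 1)"
    unfolding al by (simp add: field_simps)
  show ?thesis unfolding CB
  proof (rule eq_matI)
    fix v w assume "v < dim_row ((lam\<^sup>2 + b * ((1 - real q) * a + b * real q)) \<cdot>\<^sub>m 1\<^sub>m n
                - (lam * ((1 - real q) * a + b * (real q + 1))) \<cdot>\<^sub>m trans_mat n adj)"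
      "w < dim_col ((lam\<^sup>2 + b * ((1 - real q) * a + b * real q)) \<cdot>\<^sub>m 1\<^sub>m n
                - (lam * ((1 - real q) * a + b * (real q + 1))) \<cdot>\<^sub>m trans_mat n adj)"
    then have v: "v < n" and w: "w < n" by (auto simp: trans_mat_def)
    have dv: "real (deg n adj v) = real (q+1)" using deg_eq[OF v] by simp
    let ?A = "if adj v w then 1 else (0::real)" and ?I = "if v = w then 1 else (0::real)"
    let ?g = "(1 - real q) * a + b * (real q + 1)"
    have L: "((lam + b) \<cdot>\<^sub>m ((lam - b) \<cdot>\<^sub>m 1\<^sub>m n - al \<cdot>\<^sub>m adj_mat n adj) -
          (- al) \<cdot>\<^sub>m (b \<cdot>\<^sub>m (adj_mat n adj + real (q+1) \<cdot>\<^sub>m 1\<^sub>m n))) $$ (v, w) =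
          (lam + b) * ((lam - b) * ?I - al * ?A) - (- al) * (b * (?A + real (q+1) * ?I))"
      using v w by (simp add: adj_mat_def)
    have R: "((lam\<^sup>2 + b * ((1 - real q) * a + b * real q)) \<cdot>\<^sub>m 1\<^sub>m n
                - (lam * ?g) \<cdot>\<^sub>m trans_mat n adj) $$ (v, w) =
          (lam\<^sup>2 + b * ((1 - real q) * a + b * real q)) * ?I - (lam * ?g) * (if adj v w then 1 / real (q+1) else 0)"
      using v w dv by (simp add: trans_mat_def)
    have alq2: "?g * (1 / real (q+1)) = al" unfolding alq[symmetric] by simp
    show "((lam + b) \<cdot>\<^sub>m ((lam - b) \<cdot>\<^sub>m 1\<^sub>m n - al \<cdot>\<^sub>m adj_mat n adj) -
          (- al) \<cdot>\<^sub>m (b \<cdot>\<^sub>m (adj_mat n adj + real (q+1) \<cdot>\<^sub>m 1\<^sub>m n))) $$ (v, w) =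
         ((lam\<^sup>2 + b * ((1 - real q) * a + b * real q)) \<cdot>\<^sub>m 1\<^sub>m n
                - (lam * ?g) \<cdot>\<^sub>m trans_mat n adj) $$ (v, w)"
      unfolding L R
    proof (cases "v = w")
      case True
      then have na: "\<not> adj v w" using adj_irr by metis
      have e: "al * (b * real (q+1)) = b * ?g"
      proof -
        have "al * (b * real (q+1)) = b * (al * real (q+1))" by (simp only: mult_ac)
        then show ?thesis unfolding alq .
      qed
      show "(lam + b) * ((lam - b) * ?I - al * ?A) - (- al) * (b * (?A + real (q+1) * ?I)) =
          (lam\<^sup>2 + b * ((1 - real q) * a + b * real q)) * ?I - (lam * ?g) * (if adj v w then 1 / real (q+1) else 0)"
        using na True e by (simp add: power2_eq_square algebra_simps)
    next
      case False
      show "(lam + b) * ((lam - b) * ?I - al * ?A) - (- al) * (b * (?A + real (q+1) * ?I)) =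
          (lam\<^sup>2 + b * ((1 - real q) * a + b * real q)) * ?I - (lam * ?g) * (if adj v w then 1 / real (q+1) else 0)"
      proof (cases "adj v w")
        case True
        have "(lam * ?g) * (1 / real (q+1)) = lam * al" unfolding mult.assoc alq2 ..
        then show ?thesis using True False by (simp add: algebra_simps)
      next
        case F2: False
        then show ?thesis using False by simp
      qed
    qed
  qed (auto simp: adj_mat_def trans_mat_def)
qed

end

lemma cont_det:
  fixes A :: "real \<Rightarrow> real mat"
  assumes dims: "\<And>x. A x \<in> carrier_mat k k"
    and c: "\<And>i j. i < k \<Longrightarrow> j < k \<Longrightarrow> continuous (at x0) (\<lambda>x. A x $$ (i,j))"
  shows "continuous (at x0) (\<lambda>x. det (A x))"
proof -
  have d: "det (A x) = (\<Sum>p \<in> {p. p permutes {0..<k}}. signof p * (\<Prod>i = 0..<k. A x $$ (i, p i)))" for x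
    using dims[of x] unfolding det_def by auto
  show ?thesis unfolding d
  proof (intro continuous_sum continuous_mult continuous_const continuous_prod)
    fix p i assume "p \<in> {p. p permutes {0..<k}}" "i \<in> {0..<k}"
    then have "i < k" "p i < k" using permutes_in_image by fastforce+
    then show "continuous (at x0) (\<lambda>x. A x $$ (i, p i))" by (rule c)
  qed
qed

lemma cont_eq:
  fixes f g :: "real \<Rightarrow> real"
  assumes "continuous (at x0) f" "continuous (at x0) g" "\<And>x. x \<noteq> b \<Longrightarrow> x \<noteq> - b \<Longrightarrow> f x = g x"
  shows "f x0 = g x0"
proof -
  have ev: "eventually (\<lambda>x. f x = g x) (at x0)"
    using eventually_conj[OF eventually_neq_at_within[of b x0 UNIV] eventually_neq_at_within[of "-b" x0 UNIV]]
    by (rule eventually_mono) (use assms(3) in auto)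
  have "f \<midarrow>x0\<rightarrow> f x0" "g \<midarrow>x0\<rightarrow> g x0" using assms(1,2) continuous_at by auto
  then have "f \<midarrow>x0\<rightarrow> g x0" using tendsto_cong[OF ev] by auto
  then show ?thesis using \<open>f \<midarrow>x0\<rightarrow> f x0\<close> LIM_unique by blast
qed



theorem corollary3:
  fixes n q :: nat and adj :: "nat \<Rightarrow> nat \<Rightarrow> bool" and as :: "(nat \<times> nat) list"
    and a b lam :: real
  assumes "simple_graph n adj" and "connected_graph n adj"
    and "regular_graph n adj (q + 1)"
    and "arc_enum adj as"
    and "0 \<le> a" and "a \<le> 1"
    and "num_edges adj \<ge> n \<or> lam\<^sup>2 \<noteq> b\<^sup>2"
  shows "det (lam \<cdot>\<^sub>m 1\<^sub>m (2 * num_edges adj) - grover_mat n adj as a b) =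
           (lam\<^sup>2 - b\<^sup>2) powi (int (num_edges adj) - int n) *
           det ((lam\<^sup>2 + b * ((1 - real q) * a + b * real q)) \<cdot>\<^sub>m 1\<^sub>m n
                - (lam * ((1 - real q) * a + b * (real q + 1))) \<cdot>\<^sub>m trans_mat n adj)
       \<and> det (lam \<cdot>\<^sub>m 1\<^sub>m (2 * num_edges adj) - grover_mat n adj as a b) =
           (lam\<^sup>2 - b\<^sup>2) powi (int (num_edges adj) - int n) *
           det ((lam\<^sup>2 - lam * ((1 - real q) * a + b * (real q + 1))
                   + b * ((1 - real q) * a + b * real q)) \<cdot>\<^sub>m 1\<^sub>m n
                + (lam * (b - (real q - 1) / (real q + 1) * a))
                   \<cdot>\<^sub>m (degree_mat n adj - adj_mat n adj))"
proof -
  interpret gr n q adj as using assms(1,3,4) by unfold_locales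
  define al where "al = (2 / real (q+1) - 1) * a + b"
  define F where "F x = det (x \<cdot>\<^sub>m 1\<^sub>m (2 * num_edges adj) - grover_mat n adj as a b)" for x
  define H where "H x = det ((x\<^sup>2 + b * ((1 - real q) * a + b * real q)) \<cdot>\<^sub>m 1\<^sub>m n
                - (x * ((1 - real q) * a + b * (real q + 1))) \<cdot>\<^sub>m trans_mat n adj)" for x
  have mM: "num_edges adj = M" by (rule num_edges_eq)
  have N2: "2 * num_edges adj = N" using mM N_eq by simp
  have key: "F x * (x - b)^(M+n) * (x + b)^n = (x - b)^M * (x - b)^M * (x + b)^M * H x" for x
  proof -
    have "F x * (x - b)^(M+n) * (x + b)^n = (x - b)^N * (x + b)^M * det (NN x al b)"
      unfolding F_def N2 by (rule main_id[OF al_def])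
    moreover have E: "det (NN x al b) = H x" unfolding NN_eq[OF al_def] H_def ..
    moreover have P: "(x - b)^N = (x - b)^M * (x - b)^M" unfolding N_eq mult_2 power_add ..
    ultimately show ?thesis by simp
  qed
  have gen: "F x = (x\<^sup>2 - b\<^sup>2) powi (int M - int n) * H x" if x: "x\<^sup>2 \<noteq> b\<^sup>2" for x
  proof -
    have mu: "x - b \<noteq> 0"
    proof
      assume "x - b = 0" then have "x = b" by simp
      then show False using x by simp
    qed
    have c: "x + b \<noteq> 0"
    proof
      assume "x + b = 0" then have "x = - b" by simp
      then show False using x by simp
    qed
    have sq: "x\<^sup>2 - b\<^sup>2 = (x - b) * (x + b)" by (simp add: power2_eq_square algebra_simps)
    have pm: "(x - b)^M \<noteq> 0" using mu by simp
    have "(F x * ((x - b) * (x + b))^n) * (x - b)^M = ((x - b) * (x + b))^M * H x * (x - b)^M"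
      using key[of x] by (simp add: power_add power_mult_distrib mult_ac)
    then have e: "F x * ((x - b) * (x + b))^n = ((x - b) * (x + b))^M * H x"
      using pm by (rule mult_right_cancel[THEN iffD1, rotated])
    have pn: "((x - b) * (x + b))^n \<noteq> 0" using mu c by simp
    have pw: "(x\<^sup>2 - b\<^sup>2) powi (int M - int n) = ((x - b) * (x + b))^M / ((x - b) * (x + b))^n"
      unfolding sq using mu c by (subst power_int_diff) auto
    have "F x = (((x - b) * (x + b))^M * H x) / ((x - b) * (x + b))^n"
      by (rule eq_divide_imp[OF pn e])
    then show ?thesis unfolding pw by simp
  qed
  have part1: "F lam = (lam\<^sup>2 - b\<^sup>2) powi (int (num_edges adj) - int n) * H lam"
  proof (cases "lam\<^sup>2 = b\<^sup>2")
    case False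
    then show ?thesis using gen mM by simp
  next
    case True
    then have Mn: "n \<le> M" using assms(7) mM by auto
    then have pw: "(x\<^sup>2 - b\<^sup>2) powi (int M - int n) = (x\<^sup>2 - b\<^sup>2) ^ (M - n)" for x
    proof -
      have "int M - int n = int (M - n)" using Mn by simp
      then show ?thesis by (simp only: power_int_of_nat)
    qed
    have cF: "continuous (at lam) F" unfolding F_def
    proof (rule cont_det[of _ N])
      show "x \<cdot>\<^sub>m 1\<^sub>m (2 * num_edges adj) - grover_mat n adj as a b \<in> carrier_mat N N" for x
        using N2 by (auto simp: grover_mat_def)
      fix i j assume "i < N" "j < N"
      then have "(x \<cdot>\<^sub>m 1\<^sub>m (2 * num_edges adj) - grover_mat n adj as a b) $$ (i,j)
          = x * (if i = j then 1 else 0) - grover_mat n adj as a b $$ (i,j)" for x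
        using N2 by (subst index_minus_mat) (auto simp: dimG)
      then show "continuous (at lam) (\<lambda>x. (x \<cdot>\<^sub>m 1\<^sub>m (2 * num_edges adj) - grover_mat n adj as a b) $$ (i,j))"
        by (simp only:) (intro continuous_intros)
    qed
    have cH: "continuous (at lam) H" unfolding H_def
    proof (rule cont_det[of _ n])
      show "(x\<^sup>2 + b * ((1 - real q) * a + b * real q)) \<cdot>\<^sub>m 1\<^sub>m n
                - (x * ((1 - real q) * a + b * (real q + 1))) \<cdot>\<^sub>m trans_mat n adj \<in> carrier_mat n n" for x
        by (auto simp: trans_mat_def)
      fix i j assume "i < n" "j < n"
      then have "((x\<^sup>2 + b * ((1 - real q) * a + b * real q)) \<cdot>\<^sub>m 1\<^sub>m n
                - (x * ((1 - real q) * a + b * (real q + 1))) \<cdot>\<^sub>m trans_mat n adj) $$ (i,j)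
          = (x\<^sup>2 + b * ((1 - real q) * a + b * real q)) * (if i = j then 1 else 0)
             - (x * ((1 - real q) * a + b * (real q + 1))) * trans_mat n adj $$ (i,j)" for x
        by (auto simp: trans_mat_def)
      then show "continuous (at lam) (\<lambda>x. ((x\<^sup>2 + b * ((1 - real q) * a + b * real q)) \<cdot>\<^sub>m 1\<^sub>m n
                - (x * ((1 - real q) * a + b * (real q + 1))) \<cdot>\<^sub>m trans_mat n adj) $$ (i,j))"
        by (simp only:) (intro continuous_intros)
    qed
    have cG: "continuous (at lam) (\<lambda>x. (x\<^sup>2 - b\<^sup>2) ^ (M - n) * H x)"
      by (intro continuous_intros cH)
    have "F lam = (lam\<^sup>2 - b\<^sup>2) ^ (M - n) * H lam"
    proof (rule cont_eq[OF cF cG, of b])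
      fix x :: real assume "x \<noteq> b" "x \<noteq> - b"
      then have "x\<^sup>2 \<noteq> b\<^sup>2" by (auto simp: power2_eq_iff)
      then show "F x = (x\<^sup>2 - b\<^sup>2) ^ (M - n) * H x" using gen pw by simp
    qed
    then show ?thesis using pw mM by simp
  qed
  have Meq: "(lam\<^sup>2 + b * ((1 - real q) * a + b * real q)) \<cdot>\<^sub>m 1\<^sub>m n
                - (lam * ((1 - real q) * a + b * (real q + 1))) \<cdot>\<^sub>m trans_mat n adj
     = (lam\<^sup>2 - lam * ((1 - real q) * a + b * (real q + 1))
                   + b * ((1 - real q) * a + b * real q)) \<cdot>\<^sub>m 1\<^sub>m n
                + (lam * (b - (real q - 1) / (real q + 1) * a))
                   \<cdot>\<^sub>m (degree_mat n adj - adj_mat n adj)"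
  proof (rule eq_matI)
    fix v w assume "v < dim_row ((lam\<^sup>2 - lam * ((1 - real q) * a + b * (real q + 1))
                   + b * ((1 - real q) * a + b * real q)) \<cdot>\<^sub>m 1\<^sub>m n
                + (lam * (b - (real q - 1) / (real q + 1) * a))
                   \<cdot>\<^sub>m (degree_mat n adj - adj_mat n adj))"
      "w < dim_col ((lam\<^sup>2 - lam * ((1 - real q) * a + b * (real q + 1))
                   + b * ((1 - real q) * a + b * real q)) \<cdot>\<^sub>m 1\<^sub>m n
                + (lam * (b - (real q - 1) / (real q + 1) * a))
                   \<cdot>\<^sub>m (degree_mat n adj - adj_mat n adj))"
    then have v: "v < n" and w: "w < n" by (auto simp: adj_mat_def)
    have dv: "real (deg n adj v) = real q + 1" using deg_eq[OF v] by simp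
    have qp: "real q + 1 \<noteq> 0" by linarith
    show "((lam\<^sup>2 + b * ((1 - real q) * a + b * real q)) \<cdot>\<^sub>m 1\<^sub>m n
                - (lam * ((1 - real q) * a + b * (real q + 1))) \<cdot>\<^sub>m trans_mat n adj) $$ (v, w)
       = ((lam\<^sup>2 - lam * ((1 - real q) * a + b * (real q + 1))
                   + b * ((1 - real q) * a + b * real q)) \<cdot>\<^sub>m 1\<^sub>m n
                + (lam * (b - (real q - 1) / (real q + 1) * a))
                   \<cdot>\<^sub>m (degree_mat n adj - adj_mat n adj)) $$ (v, w)"
    proof -
      let ?g = "(1 - real q) * a + b * (real q + 1)" and ?be = "b * ((1 - real q) * a + b * real q)"
      let ?h = "b - (real q - 1) / (real q + 1) * a"
      let ?A = "if adj v w then 1 else (0::real)" and ?I = "if v = w then 1 else (0::real)"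
      have L: "((lam\<^sup>2 + ?be) \<cdot>\<^sub>m 1\<^sub>m n - (lam * ?g) \<cdot>\<^sub>m trans_mat n adj) $$ (v, w)
          = (lam\<^sup>2 + ?be) * ?I - (lam * ?g) * (if adj v w then 1 / (real q + 1) else 0)"
        using v w dv by (simp add: trans_mat_def)
      have R: "((lam\<^sup>2 - lam * ?g + ?be) \<cdot>\<^sub>m 1\<^sub>m n + (lam * ?h) \<cdot>\<^sub>m (degree_mat n adj - adj_mat n adj)) $$ (v, w)
          = (lam\<^sup>2 - lam * ?g + ?be) * ?I + (lam * ?h) * ((if v = w then real q + 1 else 0) - ?A)"
        using v w dv by (cases "v = w") (simp_all add: degree_mat_def adj_mat_def)
      have h: "?h = ?g * (1 / (real q + 1))" using qp by (simp add: field_simps)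
      have h2: "?h * (real q + 1) = ?g" unfolding h using qp by simp
      show ?thesis unfolding L R
      proof (cases "v = w")
        case True
        have "\<not> adj v w" using True adj_irr by simp
        then have "(lam * ?h) * ((if v = w then real q + 1 else 0) - ?A) = lam * ?g"
          using True h2 by (simp add: mult.assoc)
        then show "(lam\<^sup>2 + ?be) * ?I - (lam * ?g) * (if adj v w then 1 / (real q + 1) else 0) =
          (lam\<^sup>2 - lam * ?g + ?be) * ?I + (lam * ?h) * ((if v = w then real q + 1 else 0) - ?A)"
          using True \<open>\<not> adj v w\<close> by simp
      next
        case False
        show "(lam\<^sup>2 + ?be) * ?I - (lam * ?g) * (if adj v w then 1 / (real q + 1) else 0) =
          (lam\<^sup>2 - lam * ?g + ?be) * ?I + (lam * ?h) * ((if v = w then real q + 1 else 0) - ?A)"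
        proof (cases "adj v w")
          case True
          have "(lam * ?g) * (1 / (real q + 1)) = lam * ?h" unfolding h by (simp only: mult.assoc)
          then show ?thesis using True False by simp
        next
          case F2: False
          then show ?thesis using False by simp
        qed
      qed
    qed
  qed (auto simp: adj_mat_def trans_mat_def degree_mat_def)
  have p1: "det (lam \<cdot>\<^sub>m 1\<^sub>m (2 * num_edges adj) - grover_mat n adj as a b) =
           (lam\<^sup>2 - b\<^sup>2) powi (int (num_edges adj) - int n) *
           det ((lam\<^sup>2 + b * ((1 - real q) * a + b * real q)) \<cdot>\<^sub>m 1\<^sub>m n
                - (lam * ((1 - real q) * a + b * (real q + 1))) \<cdot>\<^sub>m trans_mat n adj)"
    using part1 unfolding F_def H_def .
  show ?thesis unfolding Meq[symmetric] by (rule conjI[OF p1 p1])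
qed


end
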